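(* Let $G=\mathbb{Z}_{d_1}\times\cdots\times\mathbb{Z}_{d_m}$ and $N=\mathbb{Z}_{d'_1}\times\cdots\times\mathbb{Z}_{d'_{m'}}$ be groups of the same order $n$, and let $f:G\to\tilde N$ be a function. For $r\in N$ and $k\in G$ define $v^{(r)}_k\in\mathbb{C}^G$ by $$(v^{(r)}_k)_\ell=\frac1{\sqrt n}\,\chi_k(\ell)\,\chi_r(f(\ell)),\qquad \ell\in G,$$ and let $M_r$ be the $n\times n$ matrix with columns $v^{(r)}_k$, $k\in G$. Then $\{M_r: r\in N\}$ is a complete system of mutually unbiased Hadamards if and only if for all $g_1,g_2,g_3,g_4\in G$ with $g_1+g_2=g_3+g_4$ and $\{g_1,g_2\}\neq\{g_3,g_4\}$ (as multisets) we have $f(g_1)+f(g_2)-f(g_3)-f(g_4)\in\tilde N^*$.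
   Context: $\mathbb{R}_d$ is the additive group of reals modulo $d$; $\tilde N=\mathbb{R}_{d'_1}\times\cdots\times\mathbb{R}_{d'_{m'}}\supseteq N$. For $a\in G$, $b\in G$: $\chi_a(b)=\exp(\sum_{j}\frac{2\pi i}{d_j}a_jb_j)$; for $r\in N$, $x\in\tilde N$: $\chi_r(x)=\exp(\sum_j\frac{2\pi i}{d'_j}r_jx_j)$. $\tilde N^*$ is the set of $x\in\tilde N$ having at least one component $x_j$ that is an integer not congruent to $0$ mod $d'_j$. A complex Hadamard matrix is a unitary $n\times n$ matrix all of whose entries have absolute value $1/\sqrt n$; two are mutually unbiased if $|\langle x|y\rangle|=1/\sqrt n$ for every column $x$ of one and column $y$ of the other; a complete system of mutually unbiased Hadamards is a set of $n$ pairwise mutually unbiased complex Hadamard $n\times n$ matrices. *)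

theory Defs
  imports Complex_Main "HOL-Library.Multiset"
begin

text \<open>Finite abelian group Z_{d_0} x ... x Z_{d_{m-1}}: elements are integer vectors
  (functions nat => int) with 0 <= g j < d j for j < m and g j = 0 for j >= m.\<close>
definition zgrp :: "nat \<Rightarrow> (nat \<Rightarrow> nat) \<Rightarrow> (nat \<Rightarrow> int) set" where
  "zgrp m d = {g. (\<forall>j<m. 0 \<le> g j \<and> g j < int (d j)) \<and> (\<forall>j\<ge>m. g j = 0)}"

definition zadd :: "nat \<Rightarrow> (nat \<Rightarrow> nat) \<Rightarrow> (nat \<Rightarrow> int) \<Rightarrow> (nat \<Rightarrow> int) \<Rightarrow> (nat \<Rightarrow> int)" where
  "zadd m d g h = (\<lambda>j. if j < m then (g j + h j) mod int (d j) else 0)"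

definition rmod :: "real \<Rightarrow> real \<Rightarrow> real" where
  "rmod x d = x - d * of_int \<lfloor>x / d\<rfloor>"

text \<open>The torus R_{d'_0} x ... x R_{d'_{m'-1}}: real vectors with 0 <= x j < d' j for j < m',
  and x j = 0 for j >= m'.\<close>
definition rtorus :: "nat \<Rightarrow> (nat \<Rightarrow> nat) \<Rightarrow> (nat \<Rightarrow> real) set" where
  "rtorus m d = {x. (\<forall>j<m. 0 \<le> x j \<and> x j < real (d j)) \<and> (\<forall>j\<ge>m. x j = 0)}"

definition tcomb :: "nat \<Rightarrow> (nat \<Rightarrow> nat) \<Rightarrow> (nat \<Rightarrow> real) \<Rightarrow> (nat \<Rightarrow> real) \<Rightarrow> (nat \<Rightarrow> real)
     \<Rightarrow> (nat \<Rightarrow> real) \<Rightarrow> (nat \<Rightarrow> real)" where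
  "tcomb m d a b c e = (\<lambda>j. if j < m then rmod (a j + b j - c j - e j) (real (d j)) else 0)"

definition tstar :: "nat \<Rightarrow> (nat \<Rightarrow> nat) \<Rightarrow> (nat \<Rightarrow> real) set" where
  "tstar m d = {x \<in> rtorus m d. \<exists>j<m. \<exists>k::int. x j = of_int k \<and> \<not> (int (d j) dvd k)}"

definition chiG :: "nat \<Rightarrow> (nat \<Rightarrow> nat) \<Rightarrow> (nat \<Rightarrow> int) \<Rightarrow> (nat \<Rightarrow> int) \<Rightarrow> complex" where
  "chiG m d a b = exp (\<Sum>j<m. 2 * of_real pi * \<i> * of_int (a j) * of_int (b j) / of_nat (d j))"

definition chiN :: "nat \<Rightarrow> (nat \<Rightarrow> nat) \<Rightarrow> (nat \<Rightarrow> int) \<Rightarrow> (nat \<Rightarrow> real) \<Rightarrow> complex" where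
  "chiN m d r x = exp (\<Sum>j<m. 2 * of_real pi * \<i> * of_int (r j) * of_real (x j) / of_nat (d j))"

text \<open>Matrices indexed by a finite set I: M i k is the entry in row i, column k;
  column k is the vector (\<lambda>i. M i k).  Inner product <x|y> = sum conj(x i) * y i.\<close>
definition inner_c :: "'i set \<Rightarrow> ('i \<Rightarrow> complex) \<Rightarrow> ('i \<Rightarrow> complex) \<Rightarrow> complex" where
  "inner_c I x y = (\<Sum>i\<in>I. cnj (x i) * y i)"

definition col :: "('i \<Rightarrow> 'i \<Rightarrow> complex) \<Rightarrow> 'i \<Rightarrow> ('i \<Rightarrow> complex)" where
  "col M k = (\<lambda>i. M i k)"

definition unitary_mat :: "'i set \<Rightarrow> ('i \<Rightarrow> 'i \<Rightarrow> complex) \<Rightarrow> bool" where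
  "unitary_mat I M \<longleftrightarrow>
     (\<forall>i\<in>I. \<forall>k\<in>I. (\<Sum>j\<in>I. cnj (M j i) * M j k) = (if i = k then 1 else 0)) \<and>
     (\<forall>i\<in>I. \<forall>k\<in>I. (\<Sum>j\<in>I. M i j * cnj (M k j)) = (if i = k then 1 else 0))"

definition complex_hadamard :: "'i set \<Rightarrow> ('i \<Rightarrow> 'i \<Rightarrow> complex) \<Rightarrow> bool" where
  "complex_hadamard I M \<longleftrightarrow> unitary_mat I M \<and>
     (\<forall>i\<in>I. \<forall>k\<in>I. cmod (M i k) = 1 / sqrt (real (card I)))"

definition mutually_unbiased :: "'i set \<Rightarrow> ('i \<Rightarrow> 'i \<Rightarrow> complex) \<Rightarrow> ('i \<Rightarrow> 'i \<Rightarrow> complex) \<Rightarrow> bool" where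
  "mutually_unbiased I A B \<longleftrightarrow>
     (\<forall>k\<in>I. \<forall>k'\<in>I. cmod (inner_c I (col A k) (col B k')) = 1 / sqrt (real (card I)))"

text \<open>A complete system of mutually unbiased Hadamards: a set of card I pairwise mutually unbiased
  complex Hadamard matrices.  Matrices are compared on I x I, so we use matrices that are 0 off I x I.\<close>
definition complete_MUH :: "'i set \<Rightarrow> ('i \<Rightarrow> 'i \<Rightarrow> complex) set \<Rightarrow> bool" where
  "complete_MUH I S \<longleftrightarrow> finite S \<and> card S = card I \<and>
     (\<forall>M\<in>S. complex_hadamard I M) \<and>
     (\<forall>A\<in>S. \<forall>B\<in>S. A \<noteq> B \<longrightarrow> mutually_unbiased I A B)"

definition Mr :: "nat \<Rightarrow> (nat \<Rightarrow> nat) \<Rightarrow> nat \<Rightarrow> (nat \<Rightarrow> nat) \<Rightarrow> ((nat \<Rightarrow> int) \<Rightarrow> (nat \<Rightarrow> real))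
     \<Rightarrow> (nat \<Rightarrow> int) \<Rightarrow> (nat \<Rightarrow> int) \<Rightarrow> (nat \<Rightarrow> int) \<Rightarrow> complex" where
  "Mr m d m' d' f r = (\<lambda>l k. if l \<in> zgrp m d \<and> k \<in> zgrp m d then
      chiG m d k l * chiN m' d' r (f l) / of_real (sqrt (real (card (zgrp m d)))) else 0)"

end

theory Submission
  imports Defs
begin


lemma swap4:
  "(\<Sum>k\<in>A. \<Sum>k'\<in>B. \<Sum>p\<in>C. \<Sum>p'\<in>D. P k k' p p') = (\<Sum>p\<in>C. \<Sum>p'\<in>D. \<Sum>k\<in>A. \<Sum>k'\<in>B. P k k' p p')"
proof -
  have "(\<Sum>k\<in>A. \<Sum>k'\<in>B. \<Sum>p\<in>C. \<Sum>p'\<in>D. P k k' p p') = (\<Sum>k\<in>A. \<Sum>p\<in>C. \<Sum>k'\<in>B. \<Sum>p'\<in>D. P k k' p p')"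
    by (rule sum.cong[OF refl], rule sum.swap)
  also have "\<dots> = (\<Sum>p\<in>C. \<Sum>k\<in>A. \<Sum>k'\<in>B. \<Sum>p'\<in>D. P k k' p p')" by (rule sum.swap)
  also have "\<dots> = (\<Sum>p\<in>C. \<Sum>k\<in>A. \<Sum>p'\<in>D. \<Sum>k'\<in>B. P k k' p p')"
    by (rule sum.cong[OF refl], rule sum.cong[OF refl], rule sum.swap)
  also have "\<dots> = (\<Sum>p\<in>C. \<Sum>p'\<in>D. \<Sum>k\<in>A. \<Sum>k'\<in>B. P k k' p p')"
    by (rule sum.cong[OF refl], rule sum.swap)
  finally show ?thesis .
qed

lemma gen2:
  fixes \<alpha> \<beta> :: "'k \<Rightarrow> 'p \<Rightarrow> complex" and v :: "'p \<Rightarrow> complex"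
  shows "(\<Sum>k\<in>K. \<Sum>k'\<in>K. (\<Sum>p\<in>P. \<alpha> k p * \<beta> k' p * v p) * cnj (\<Sum>p\<in>P. \<alpha> k p * \<beta> k' p * v p))
   = (\<Sum>p\<in>P. \<Sum>p'\<in>P. v p * cnj (v p') * (\<Sum>k\<in>K. \<alpha> k p * cnj (\<alpha> k p')) * (\<Sum>k'\<in>K. \<beta> k' p * cnj (\<beta> k' p')))"
proof -
  have "(\<Sum>k\<in>K. \<Sum>k'\<in>K. (\<Sum>p\<in>P. \<alpha> k p * \<beta> k' p * v p) * cnj (\<Sum>p\<in>P. \<alpha> k p * \<beta> k' p * v p))
     = (\<Sum>k\<in>K. \<Sum>k'\<in>K. \<Sum>p\<in>P. \<Sum>p'\<in>P. (\<alpha> k p * \<beta> k' p * v p) * cnj (\<alpha> k p' * \<beta> k' p' * v p'))"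
    by (simp add: sum_product cnj_sum)
  also have "\<dots> = (\<Sum>p\<in>P. \<Sum>p'\<in>P. \<Sum>k\<in>K. \<Sum>k'\<in>K. (\<alpha> k p * \<beta> k' p * v p) * cnj (\<alpha> k p' * \<beta> k' p' * v p'))"
    by (rule swap4)
  also have "\<dots> = (\<Sum>p\<in>P. \<Sum>p'\<in>P. v p * cnj (v p') * (\<Sum>k\<in>K. \<alpha> k p * cnj (\<alpha> k p')) * (\<Sum>k'\<in>K. \<beta> k' p * cnj (\<beta> k' p')))"
    by (simp add: sum_product sum_distrib_left mult_ac)
  finally show ?thesis .
qed




locale chr =
  fixes I :: "'g set" and chi :: "'g \<Rightarrow> 'g \<Rightarrow> complex" and pl :: "'g \<Rightarrow> 'g \<Rightarrow> 'g" and n :: nat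
  assumes fin: "finite I" and cardI: "card I = n"
    and pl_in: "a\<in>I \<Longrightarrow> b\<in>I \<Longrightarrow> pl a b \<in> I"
    and pl_comm: "pl a b = pl b a"
    and mult: "k\<in>I \<Longrightarrow> a\<in>I \<Longrightarrow> b\<in>I \<Longrightarrow> chi k a * chi k b = chi k (pl a b)"
    and orth: "a\<in>I \<Longrightarrow> b\<in>I \<Longrightarrow> (\<Sum>k\<in>I. cnj (chi k a) * chi k b) = (if a = b then of_nat n else 0)"
    and unim: "k\<in>I \<Longrightarrow> a\<in>I \<Longrightarrow> cmod (chi k a) = 1"
    and sym: "k\<in>I \<Longrightarrow> a\<in>I \<Longrightarrow> chi k a = chi a k"
begin

lemma orth': "a\<in>I \<Longrightarrow> b\<in>I \<Longrightarrow> (\<Sum>k\<in>I. chi k a * cnj (chi k b)) = (if a = b then of_nat n else 0)"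
proof -
  assume "a\<in>I" "b\<in>I"
  have "(\<Sum>k\<in>I. chi k a * cnj (chi k b)) = cnj (\<Sum>k\<in>I. cnj (chi k a) * chi k b)"
    by (simp add: cnj_sum mult.commute)
  then show ?thesis using orth[OF \<open>a\<in>I\<close> \<open>b\<in>I\<close>] by simp
qed

lemma orth2: "a\<in>I \<Longrightarrow> b\<in>I \<Longrightarrow> (\<Sum>k\<in>I. cnj (chi a k) * chi b k) = (if a = b then of_nat n else 0)"
proof -
  assume ab: "a\<in>I" "b\<in>I"
  have "(\<Sum>k\<in>I. cnj (chi a k) * chi b k) = (\<Sum>k\<in>I. cnj (chi k a) * chi k b)"
    by (rule sum.cong[OF refl]) (simp add: sym[OF ab(1)] sym[OF ab(2)])
  then show ?thesis using orth[OF ab] by simp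
qed

lemma orth2': "a\<in>I \<Longrightarrow> b\<in>I \<Longrightarrow> (\<Sum>k\<in>I. chi a k * cnj (chi b k)) = (if a = b then of_nat n else 0)"
proof -
  assume ab: "a\<in>I" "b\<in>I"
  have "(\<Sum>k\<in>I. chi a k * cnj (chi b k)) = (\<Sum>k\<in>I. chi k a * cnj (chi k b))"
    by (rule sum.cong[OF refl]) (simp add: sym[OF ab(1)] sym[OF ab(2)])
  then show ?thesis using orth'[OF ab] by simp
qed

lemma four: "a\<in>I \<Longrightarrow> b\<in>I \<Longrightarrow> c\<in>I \<Longrightarrow> e\<in>I \<Longrightarrow>
  (\<Sum>k\<in>I. cnj (chi k a) * cnj (chi k b) * (chi k c * chi k e)) = (if pl a b = pl c e then of_nat n else 0)"
proof -
  assume as: "a\<in>I" "b\<in>I" "c\<in>I" "e\<in>I"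
  have "(\<Sum>k\<in>I. cnj (chi k a) * cnj (chi k b) * (chi k c * chi k e)) = (\<Sum>k\<in>I. cnj (chi k (pl a b)) * chi k (pl c e))"
    by (rule sum.cong[OF refl]) (metis as mult complex_cnj_mult)
  then show ?thesis using orth[OF pl_in pl_in] as by simp
qed

lemma four': "a\<in>I \<Longrightarrow> b\<in>I \<Longrightarrow> c\<in>I \<Longrightarrow> e\<in>I \<Longrightarrow>
  (\<Sum>k\<in>I. chi k a * chi k b * cnj (chi k c * chi k e)) = (if pl a b = pl c e then of_nat n else 0)"
proof -
  assume as: "a\<in>I" "b\<in>I" "c\<in>I" "e\<in>I"
  have "(\<Sum>k\<in>I. chi k a * chi k b * cnj (chi k c * chi k e)) = cnj (\<Sum>k\<in>I. cnj (chi k a) * cnj (chi k b) * (chi k c * chi k e))"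
    by (simp add: cnj_sum)
  then show ?thesis using four[OF as] by simp
qed

lemma four'': "a\<in>I \<Longrightarrow> b\<in>I \<Longrightarrow> c\<in>I \<Longrightarrow> e\<in>I \<Longrightarrow>
  (\<Sum>k\<in>I. chi k a * chi k b * (cnj (chi k c) * cnj (chi k e))) = (if pl a b = pl c e then of_nat n else 0)"
  using four' by simp

definition z :: "('g \<Rightarrow> complex) \<Rightarrow> 'g \<Rightarrow> 'g \<Rightarrow> complex" where
  "z u k k' = (\<Sum>l\<in>I. cnj (chi k l) * chi k' l * u l)"

lemma zz: "(\<Sum>k\<in>I. \<Sum>k'\<in>I. z u k k' * cnj (z u k k')) = of_nat n ^ 2 * (\<Sum>l\<in>I. u l * cnj (u l))"
proof -
  have "(\<Sum>k\<in>I. \<Sum>k'\<in>I. z u k k' * cnj (z u k k'))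
    = (\<Sum>p\<in>I. \<Sum>p'\<in>I. u p * cnj (u p') * (\<Sum>k\<in>I. cnj (chi k p) * cnj (cnj (chi k p'))) * (\<Sum>k'\<in>I. chi k' p * cnj (chi k' p')))"
    unfolding z_def by (rule gen2[where \<alpha>="\<lambda>k p. cnj (chi k p)" and \<beta>=chi])
  also have "\<dots> = (\<Sum>p\<in>I. \<Sum>p'\<in>I. if p = p' then u p * cnj (u p') * of_nat n ^ 2 else 0)"
    by (rule sum.cong[OF refl], rule sum.cong[OF refl]) (simp add: orth orth' power2_eq_square)
  also have "\<dots> = of_nat n ^ 2 * (\<Sum>l\<in>I. u l * cnj (u l))"
    by (simp add: fin sum_distrib_left mult.commute)
  finally show ?thesis .
qed

definition F :: "('g \<Rightarrow> complex) \<Rightarrow> complex" where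
  "F u = (\<Sum>p\<in>I\<times>I. \<Sum>p'\<in>I\<times>I. if pl (fst p) (snd p) = pl (fst p') (snd p')
      then u (fst p) * u (snd p) * cnj (u (fst p')) * cnj (u (snd p')) else 0)"

lemma zsq: "z u k k' * z u k k' = (\<Sum>p\<in>I\<times>I. cnj (chi k (fst p)) * cnj (chi k (snd p)) * (chi k' (fst p) * chi k' (snd p)) * (u (fst p) * u (snd p)))"
  unfolding z_def sum_product sum.cartesian_product by (rule sum.cong[OF refl]) (auto simp: mult_ac)

lemma z4: "(\<Sum>k\<in>I. \<Sum>k'\<in>I. (z u k k' * z u k k') * cnj (z u k k' * z u k k')) = of_nat n ^ 2 * F u"
proof -
  have "(\<Sum>k\<in>I. \<Sum>k'\<in>I. (z u k k' * z u k k') * cnj (z u k k' * z u k k'))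
    = (\<Sum>p\<in>I\<times>I. \<Sum>p'\<in>I\<times>I. (u (fst p) * u (snd p)) * cnj (u (fst p') * u (snd p')) *
        (\<Sum>k\<in>I. (cnj (chi k (fst p)) * cnj (chi k (snd p))) * cnj (cnj (chi k (fst p')) * cnj (chi k (snd p'))))
      * (\<Sum>k'\<in>I. (chi k' (fst p) * chi k' (snd p)) * cnj (chi k' (fst p') * chi k' (snd p'))))"
    unfolding zsq by (rule gen2)
  also have "\<dots> = (\<Sum>p\<in>I\<times>I. \<Sum>p'\<in>I\<times>I. of_nat n ^ 2 * (if pl (fst p) (snd p) = pl (fst p') (snd p')
      then u (fst p) * u (snd p) * cnj (u (fst p')) * cnj (u (snd p')) else 0))"
    by (rule sum.cong[OF refl], rule sum.cong[OF refl]) (auto simp: four four'' power2_eq_square)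
  also have "\<dots> = of_nat n ^ 2 * F u" by (simp add: F_def sum_distrib_left)
  finally show ?thesis .
qed

end



lemma sum2_nonneg_eq_0_iff:
  fixes g :: "'a \<Rightarrow> 'b \<Rightarrow> real"
  assumes "finite A" "finite B" "\<And>x y. x\<in>A \<Longrightarrow> y\<in>B \<Longrightarrow> 0 \<le> g x y"
  shows "(\<Sum>x\<in>A. \<Sum>y\<in>B. g x y) = 0 \<longleftrightarrow> (\<forall>x\<in>A. \<forall>y\<in>B. g x y = 0)"
proof -
  have "(\<Sum>x\<in>A. \<Sum>y\<in>B. g x y) = 0 \<longleftrightarrow> (\<forall>x\<in>A. (\<Sum>y\<in>B. g x y) = 0)"
    using assms by (intro sum_nonneg_eq_0_iff) (auto intro: sum_nonneg)
  also have "\<dots> \<longleftrightarrow> (\<forall>x\<in>A. \<forall>y\<in>B. g x y = 0)"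
    using assms by (simp add: sum_nonneg_eq_0_iff)
  finally show ?thesis .
qed

locale chr2 = chr I chi pl n for I :: "'g set" and chi pl n +
  fixes NN :: "'r set" and h :: "'r \<Rightarrow> 'g \<Rightarrow> complex"
  assumes finN: "finite NN" and cardN: "card NN = n"
    and hunim: "r\<in>NN \<Longrightarrow> l\<in>I \<Longrightarrow> cmod (h r l) = 1"
    and npos: "0 < n"
begin

definition u :: "'r \<Rightarrow> 'r \<Rightarrow> 'g \<Rightarrow> complex" where
  "u r r' l = cnj (h r l) * h r' l"

definition W :: "'g \<times> 'g \<Rightarrow> 'g \<times> 'g \<Rightarrow> complex" where
  "W p p' = (\<Sum>r\<in>NN. h r (fst p) * h r (snd p) * cnj (h r (fst p')) * cnj (h r (snd p')))"

definition Q :: "'g \<times> 'g \<Rightarrow> 'g \<times> 'g \<Rightarrow> bool" where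
  "Q p p' \<longleftrightarrow> pl (fst p) (snd p) = pl (fst p') (snd p')"

definition triv :: "'g \<times> 'g \<Rightarrow> 'g \<times> 'g \<Rightarrow> bool" where
  "triv p p' \<longleftrightarrow> (fst p = fst p' \<and> snd p = snd p') \<or> (fst p = snd p' \<and> snd p = fst p')"

lemma hh: "r\<in>NN \<Longrightarrow> l\<in>I \<Longrightarrow> cnj (h r l) * h r l = 1"
  using hunim complex_norm_square by (metis mult.commute of_real_1 power_one)

lemma FW: "(\<Sum>r\<in>NN. \<Sum>r'\<in>NN. F (u r r')) =
  (\<Sum>p\<in>I\<times>I. \<Sum>p'\<in>I\<times>I. if Q p p' then cnj (W p p') * W p p' else 0)"
proof -
  define w where "w r p p' = h r (fst p) * h r (snd p) * cnj (h r (fst p')) * cnj (h r (snd p'))" for r p p'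
  have "(\<Sum>r\<in>NN. \<Sum>r'\<in>NN. F (u r r')) =
     (\<Sum>r\<in>NN. \<Sum>r'\<in>NN. \<Sum>p\<in>I\<times>I. \<Sum>p'\<in>I\<times>I. if Q p p' then cnj (w r p p') * w r' p p' else 0)"
    unfolding F_def Q_def u_def w_def
    by (rule sum.cong[OF refl])+ (simp add: mult_ac)
  also have "\<dots> = (\<Sum>p\<in>I\<times>I. \<Sum>p'\<in>I\<times>I. \<Sum>r\<in>NN. \<Sum>r'\<in>NN. if Q p p' then cnj (w r p p') * w r' p p' else 0)"
    by (rule swap4)
  also have "\<dots> = (\<Sum>p\<in>I\<times>I. \<Sum>p'\<in>I\<times>I. if Q p p' then cnj (W p p') * W p p' else 0)"
    unfolding W_def w_def[symmetric]
    by (rule sum.cong[OF refl])+ (simp add: cnj_sum sum_product)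
  finally show ?thesis .
qed

definition S4 :: "'r \<Rightarrow> 'r \<Rightarrow> real" where
  "S4 r r' = (\<Sum>k\<in>I. \<Sum>k'\<in>I. cmod (z (u r r') k k') ^ 4)"

lemma S4F: "complex_of_real (S4 r r') = of_nat n ^ 2 * F (u r r')"
proof -
  have "complex_of_real (S4 r r') = (\<Sum>k\<in>I. \<Sum>k'\<in>I. (z (u r r') k k' * z (u r r') k k') * cnj (z (u r r') k k' * z (u r r') k k'))"
    unfolding S4_def of_real_sum
  proof (rule sum.cong[OF refl])+
    fix k k'
    let ?w = "z (u r r') k k' * z (u r r') k k'"
    have "complex_of_real (cmod ?w ^ 2) = ?w * cnj ?w" by (rule complex_norm_square)
    moreover have "cmod ?w ^ 2 = cmod (z (u r r') k k') ^ 4" by (simp add: norm_mult power2_eq_square power4_eq_xxxx)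
    ultimately show "complex_of_real (cmod (z (u r r') k k') ^ 4) = ?w * cnj ?w" by simp
  qed
  then show ?thesis using z4 by simp
qed

lemma S2: "r\<in>NN \<Longrightarrow> r'\<in>NN \<Longrightarrow> (\<Sum>k\<in>I. \<Sum>k'\<in>I. cmod (z (u r r') k k') ^ 2) = real n ^ 3"
proof -
  assume rr: "r\<in>NN" "r'\<in>NN"
  have "complex_of_real (\<Sum>k\<in>I. \<Sum>k'\<in>I. cmod (z (u r r') k k') ^ 2) = (\<Sum>k\<in>I. \<Sum>k'\<in>I. z (u r r') k k' * cnj (z (u r r') k k'))"
    unfolding of_real_sum by (rule sum.cong[OF refl])+ (rule complex_norm_square)
  also have "\<dots> = of_nat n ^ 2 * (\<Sum>l\<in>I. u r r' l * cnj (u r r' l))" by (rule zz)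
  also have "\<dots> = of_nat n ^ 2 * (\<Sum>l\<in>I. 1)"
  proof -
    have "\<And>l. l\<in>I \<Longrightarrow> u r r' l * cnj (u r r' l) = 1"
      unfolding u_def using hh rr by (metis complex_cnj_cnj complex_cnj_mult mult.commute mult.left_commute mult_1_right)
    then show ?thesis by simp
  qed
  also have "\<dots> = complex_of_real (real n ^ 3)" using cardI by (simp add: power_def)
  finally show ?thesis using of_real_eq_iff by blast
qed

lemma zdiag: "r\<in>NN \<Longrightarrow> k\<in>I \<Longrightarrow> k'\<in>I \<Longrightarrow> z (u r r) k k' = (if k = k' then of_nat n else 0)"
proof -
  assume a: "r\<in>NN" "k\<in>I" "k'\<in>I"
  have "z (u r r) k k' = (\<Sum>l\<in>I. cnj (chi k l) * chi k' l)"
    unfolding z_def u_def by (rule sum.cong[OF refl]) (simp add: hh a)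
  then show ?thesis using orth2[OF a(2,3)] by simp
qed

lemma S4diag: "r\<in>NN \<Longrightarrow> S4 r r = real n ^ 5"
proof -
  assume a: "r\<in>NN"
  have "S4 r r = (\<Sum>k\<in>I. \<Sum>k'\<in>I. if k = k' then real n ^ 4 else 0)"
    unfolding S4_def by (rule sum.cong[OF refl])+ (simp add: zdiag a)
  also have "\<dots> = real n ^ 5" using fin cardI by (simp add: eval_nat_numeral)
  finally show ?thesis .
qed

definition D :: "'r \<Rightarrow> 'r \<Rightarrow> real" where
  "D r r' = (\<Sum>k\<in>I. \<Sum>k'\<in>I. (cmod (z (u r r') k k') ^ 2 - real n) ^ 2)"

lemma DS4: "r\<in>NN \<Longrightarrow> r'\<in>NN \<Longrightarrow> D r r' = S4 r r' - real n ^ 4"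
proof -
  assume rr: "r\<in>NN" "r'\<in>NN"
  have "D r r' = (\<Sum>k\<in>I. \<Sum>k'\<in>I. cmod (z (u r r') k k') ^ 4 - 2 * real n * cmod (z (u r r') k k') ^ 2 + real n ^ 2)"
    unfolding D_def by (rule sum.cong[OF refl])+ (simp add: power2_eq_square power4_eq_xxxx algebra_simps)
  also have "\<dots> = S4 r r' - 2 * real n * (\<Sum>k\<in>I. \<Sum>k'\<in>I. cmod (z (u r r') k k') ^ 2) + real n ^ 4"
    unfolding S4_def using cardI by (simp add: sum.distrib sum_subtractf sum_distrib_left power_def)
  also have "\<dots> = S4 r r' - real n ^ 4" using S2[OF rr] by (simp add: power_def)
  finally show ?thesis .
qed

end



lemma sumpair: "(\<Sum>p\<in>A\<times>B. G p) = (\<Sum>a\<in>A. \<Sum>b\<in>B. G (a,b))"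
  by (simp add: sum.cartesian_product)

context chr2 begin

lemma Wtriv: "p\<in>I\<times>I \<Longrightarrow> p'\<in>I\<times>I \<Longrightarrow> triv p p' \<Longrightarrow> W p p' = of_nat n"
proof -
  assume a: "p\<in>I\<times>I" "p'\<in>I\<times>I" "triv p p'"
  have "W p p' = (\<Sum>r\<in>NN. 1)"
    unfolding W_def
  proof (rule sum.cong[OF refl])
    fix r assume r: "r\<in>NN"
    have 1: "cnj (h r (fst p)) * h r (fst p) = 1" "cnj (h r (snd p)) * h r (snd p) = 1"
      using a hh r by auto
    have e: "x * y * cnj x * cnj y = (cnj x * x) * (cnj y * y)" "x * y * cnj y * cnj x = (cnj x * x) * (cnj y * y)" for x y :: complex
      by (simp_all add: mult_ac)
    show "h r (fst p) * h r (snd p) * cnj (h r (fst p')) * cnj (h r (snd p')) = 1"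
      using a(3) 1 unfolding triv_def by (auto simp only: e mult_1_left)
  qed
  then show ?thesis using cardN by simp
qed

lemma Qtriv: "triv p p' \<Longrightarrow> Q p p'"
  unfolding triv_def Q_def using pl_comm by auto

lemma count_inner: "a\<in>I \<Longrightarrow> b\<in>I \<Longrightarrow> (\<Sum>p'\<in>I\<times>I. if triv (a,b) p' then (1::real) else 0) = (if a = b then 1 else 2)"
proof -
  assume ab: "a\<in>I" "b\<in>I"
  have "(\<Sum>p'\<in>I\<times>I. if triv (a,b) p' then (1::real) else 0) = (\<Sum>c\<in>I. \<Sum>e\<in>I. if triv (a,b) (c,e) then (1::real) else 0)"
    by (rule sumpair)
  also have "\<dots> = (\<Sum>c\<in>I. \<Sum>e\<in>I. (if c = a then (if e = b then 1 else 0) else 0) + (if a \<noteq> b then (if c = b then (if e = a then 1 else 0) else 0) else 0))"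
    by (rule sum.cong[OF refl])+ (auto simp: triv_def)
  also have "\<dots> = (\<Sum>c\<in>I. (if c = a then 1 else 0) + (if a \<noteq> b then (if c = b then 1 else 0) else 0))"
    by (rule sum.cong[OF refl]) (auto simp: sum.distrib ab fin)
  also have "\<dots> = (if a = b then 1 else 2)"
    using ab fin by (simp add: sum.distrib)
  finally show ?thesis .
qed

lemma count: "(\<Sum>p\<in>I\<times>I. \<Sum>p'\<in>I\<times>I. if triv p p' then (1::real) else 0) = 2 * real n ^ 2 - real n"
proof -
  have "(\<Sum>p\<in>I\<times>I. \<Sum>p'\<in>I\<times>I. if triv p p' then (1::real) else 0) = (\<Sum>a\<in>I. \<Sum>b\<in>I. \<Sum>p'\<in>I\<times>I. if triv (a,b) p' then (1::real) else 0)"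
    by (rule sumpair)
  also have "\<dots> = (\<Sum>a\<in>I. \<Sum>b\<in>I. 2 - (if a = b then 1 else 0))"
    by (rule sum.cong[OF refl])+ (simp add: count_inner)
  also have "\<dots> = 2 * real n ^ 2 - real n"
    using fin cardI by (simp add: sum_subtractf power2_eq_square algebra_simps)
  finally show ?thesis .
qed

definition R :: real where
  "R = (\<Sum>p\<in>I\<times>I. \<Sum>p'\<in>I\<times>I. if Q p p' \<and> \<not> triv p p' then cmod (W p p') ^ 2 else 0)"

lemma R_nonneg: "0 \<le> R"
  unfolding R_def by (intro sum_nonneg) auto

lemma SumQ: "(\<Sum>p\<in>I\<times>I. \<Sum>p'\<in>I\<times>I. if Q p p' then cnj (W p p') * W p p' else 0)
   = complex_of_real (real n ^ 2 * (2 * real n ^ 2 - real n) + R)"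
proof -
  have "(\<Sum>p\<in>I\<times>I. \<Sum>p'\<in>I\<times>I. if Q p p' then cnj (W p p') * W p p' else 0)
     = complex_of_real (\<Sum>p\<in>I\<times>I. \<Sum>p'\<in>I\<times>I. (if triv p p' then real n ^ 2 else 0) + (if Q p p' \<and> \<not> triv p p' then cmod (W p p') ^ 2 else 0))"
    unfolding of_real_sum
  proof (rule sum.cong[OF refl])+
    fix p p' assume pp: "p\<in>I\<times>I" "p'\<in>I\<times>I"
    show "(if Q p p' then cnj (W p p') * W p p' else 0) = complex_of_real ((if triv p p' then real n ^ 2 else 0) + (if Q p p' \<and> \<not> triv p p' then cmod (W p p') ^ 2 else 0))"
      using Wtriv[OF pp] Qtriv[of p p'] complex_norm_square[of "W p p'"]
      by (auto simp: mult.commute)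
  qed
  also have "\<dots> = complex_of_real (real n ^ 2 * (\<Sum>p\<in>I\<times>I. \<Sum>p'\<in>I\<times>I. if triv p p' then (1::real) else 0) + R)"
  proof -
    have "(\<Sum>p\<in>I\<times>I. \<Sum>p'\<in>I\<times>I. (if triv p p' then real n ^ 2 else 0) + (if Q p p' \<and> \<not> triv p p' then cmod (W p p') ^ 2 else 0))
      = (\<Sum>p\<in>I\<times>I. \<Sum>p'\<in>I\<times>I. real n ^ 2 * (if triv p p' then 1 else 0)) + R"
      unfolding R_def sum.distrib[symmetric] by (rule sum.cong[OF refl])+ simp
    then show ?thesis by (simp add: sum_distrib_left)
  qed
  also have "\<dots> = complex_of_real (real n ^ 2 * (2 * real n ^ 2 - real n) + R)" by (simp add: count)
  finally show ?thesis .
qed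

lemma main_identity: "(\<Sum>r\<in>NN. \<Sum>r'\<in>NN. if r = r' then 0 else D r r') = real n ^ 2 * R"
proof -
  have T1: "complex_of_real (\<Sum>r\<in>NN. \<Sum>r'\<in>NN. S4 r r') = complex_of_real (real n ^ 2 * (real n ^ 2 * (2 * real n ^ 2 - real n) + R))"
    unfolding of_real_sum S4F by (simp add: sum_distrib_left[symmetric] FW SumQ)
  hence T1': "(\<Sum>r\<in>NN. \<Sum>r'\<in>NN. S4 r r') = real n ^ 2 * (real n ^ 2 * (2 * real n ^ 2 - real n) + R)"
    using of_real_eq_iff by blast
  have "(\<Sum>r\<in>NN. \<Sum>r'\<in>NN. S4 r r') = (\<Sum>r\<in>NN. \<Sum>r'\<in>NN. (if r = r' then 0 else D r r') + real n ^ 4 + (if r = r' then real n ^ 5 - real n ^ 4 else 0))"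
    by (rule sum.cong[OF refl])+ (auto simp: S4diag DS4)
  also have "\<dots> = (\<Sum>r\<in>NN. \<Sum>r'\<in>NN. if r = r' then 0 else D r r') + real n ^ 2 * real n ^ 4 + real n * (real n ^ 5 - real n ^ 4)"
    using finN cardN by (simp add: sum.distrib power2_eq_square)
  finally have "(\<Sum>r\<in>NN. \<Sum>r'\<in>NN. if r = r' then 0 else D r r') = real n ^ 2 * (real n ^ 2 * (2 * real n ^ 2 - real n) + R) - real n ^ 2 * real n ^ 4 - real n * (real n ^ 5 - real n ^ 4)"
    using T1' by linarith
  also have "\<dots> = real n ^ 2 * R" by (simp add: algebra_simps eval_nat_numeral)
  finally show ?thesis .
qed

lemma equiv_abstract:
  "(\<forall>r\<in>NN. \<forall>r'\<in>NN. r \<noteq> r' \<longrightarrow> (\<forall>k\<in>I. \<forall>k'\<in>I. cmod (z (u r r') k k') ^ 2 = real n))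
   \<longleftrightarrow> (\<forall>p\<in>I\<times>I. \<forall>p'\<in>I\<times>I. Q p p' \<and> \<not> triv p p' \<longrightarrow> W p p' = 0)"
proof -
  have D0: "D r r' = 0 \<longleftrightarrow> (\<forall>k\<in>I. \<forall>k'\<in>I. cmod (z (u r r') k k') ^ 2 = real n)" for r r'
    unfolding D_def by (subst sum2_nonneg_eq_0_iff) (auto simp: fin)
  have Dn: "0 \<le> D r r'" for r r' unfolding D_def by (intro sum_nonneg) auto
  have "(\<forall>r\<in>NN. \<forall>r'\<in>NN. r \<noteq> r' \<longrightarrow> (\<forall>k\<in>I. \<forall>k'\<in>I. cmod (z (u r r') k k') ^ 2 = real n))
     \<longleftrightarrow> (\<forall>r\<in>NN. \<forall>r'\<in>NN. (if r = r' then 0 else D r r') = 0)"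
    using D0 by auto
  also have "\<dots> \<longleftrightarrow> (\<Sum>r\<in>NN. \<Sum>r'\<in>NN. if r = r' then 0 else D r r') = 0"
    by (subst sum2_nonneg_eq_0_iff) (auto simp: finN Dn)
  also have "\<dots> \<longleftrightarrow> R = 0" using main_identity npos by simp
  also have "\<dots> \<longleftrightarrow> (\<forall>p\<in>I\<times>I. \<forall>p'\<in>I\<times>I. Q p p' \<and> \<not> triv p p' \<longrightarrow> W p p' = 0)"
    unfolding R_def by (subst sum2_nonneg_eq_0_iff) (auto simp: fin)
  finally show ?thesis .
qed

end



lemma zgrp_0: "zgrp 0 d = {\<lambda>_. 0}"
  unfolding zgrp_def by auto

lemma zgrp_Suc: "zgrp (Suc m) d = (\<lambda>(g,t). g(m:=t)) ` (zgrp m d \<times> {0..<int (d m)})"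
proof
  show "zgrp (Suc m) d \<subseteq> (\<lambda>(g,t). g(m:=t)) ` (zgrp m d \<times> {0..<int (d m)})"
  proof
    fix g assume g: "g \<in> zgrp (Suc m) d"
    have "g = (\<lambda>(g,t). g(m:=t)) (g(m:=0), g m)" by simp
    moreover have "(g(m:=0), g m) \<in> zgrp m d \<times> {0..<int (d m)}"
      using g unfolding zgrp_def by auto
    ultimately show "g \<in> (\<lambda>(g,t). g(m:=t)) ` (zgrp m d \<times> {0..<int (d m)})" by blast
  qed
next
  show "(\<lambda>(g,t). g(m:=t)) ` (zgrp m d \<times> {0..<int (d m)}) \<subseteq> zgrp (Suc m) d"
    unfolding zgrp_def by (auto simp: less_Suc_eq)
qed

lemma zgrp_inj: "inj_on (\<lambda>(g,t). g(m:=t)) (zgrp m d \<times> {0..<int (d m)})"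
proof (rule inj_onI, clarify)
  fix g t g' t' assume a: "g \<in> zgrp m d" "g' \<in> zgrp m d" "g(m := t) = g'(m := t')"
  then have "t = t'" by (metis fun_upd_same)
  moreover have "g = g'"
  proof
    fix j show "g j = g' j"
    proof (cases "j = m")
      case True then show ?thesis using a unfolding zgrp_def by auto
    next
      case False then show ?thesis using a(3) by (metis fun_upd_other)
    qed
  qed
  ultimately show "g = g' \<and> t = t'" by simp
qed

lemma finite_zgrp: "finite (zgrp m d)"
  by (induction m) (auto simp: zgrp_0 zgrp_Suc)

lemma sum_zgrp_prod:
  fixes \<phi> :: "nat \<Rightarrow> int \<Rightarrow> 'a::comm_semiring_1"
  shows "(\<Sum>g\<in>zgrp m d. \<Prod>j<m. \<phi> j (g j)) = (\<Prod>j<m. \<Sum>t\<in>{0..<int (d j)}. \<phi> j t)"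
proof (induction m)
  case 0 then show ?case by (simp add: zgrp_0)
next
  case (Suc m)
  have "(\<Sum>g\<in>zgrp (Suc m) d. \<Prod>j<Suc m. \<phi> j (g j)) = (\<Sum>x\<in>zgrp m d \<times> {0..<int (d m)}. \<Prod>j<Suc m. \<phi> j (((\<lambda>(g,t). g(m:=t)) x) j))"
    unfolding zgrp_Suc by (rule sum.reindex[OF zgrp_inj, unfolded comp_def])
  also have "\<dots> = (\<Sum>g\<in>zgrp m d. \<Sum>t\<in>{0..<int (d m)}. (\<Prod>j<m. \<phi> j (g j)) * \<phi> m t)"
    by (subst sum.cartesian_product) (rule sum.cong[OF refl], auto simp: lessThan_Suc zgrp_def mult.commute)
  also have "\<dots> = (\<Sum>g\<in>zgrp m d. \<Prod>j<m. \<phi> j (g j)) * (\<Sum>t\<in>{0..<int (d m)}. \<phi> m t)"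
    by (simp add: sum_product)
  also have "\<dots> = (\<Prod>j<Suc m. \<Sum>t\<in>{0..<int (d j)}. \<phi> j t)" using Suc by (simp add: lessThan_Suc mult.commute)
  finally show ?case .
qed

lemma card_zgrp: "card (zgrp m d) = (\<Prod>j<m. d j)"
proof -
  have "real (card (zgrp m d)) = (\<Sum>g\<in>zgrp m d. \<Prod>j<m. (\<lambda>j t. (1::real)) j (g j))" by simp
  also have "\<dots> = (\<Prod>j<m. \<Sum>t\<in>{0..<int (d j)}. (1::real))" by (rule sum_zgrp_prod)
  also have "\<dots> = real (\<Prod>j<m. d j)" by simp
  finally show ?thesis by linarith
qed

lemma zero_zgrp: "(\<lambda>_. 0) \<in> zgrp m d" if "\<forall>j<m. 0 < d j"
  using that unfolding zgrp_def by auto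

lemma cis_eq_1: "cis x = 1 \<longleftrightarrow> (\<exists>k::int. x = 2 * pi * of_int k)"
proof
  assume "cis x = 1"
  then have "cos x = 1" by (metis Re_complex_of_real cis.sel(1) of_real_1)
  then show "\<exists>k::int. x = 2 * pi * of_int k" by (auto simp: cos_one_2pi_int mult_ac)
next
  assume "\<exists>k::int. x = 2 * pi * of_int k"
  then show "cis x = 1" by auto
qed

lemma geo_sum:
  assumes D: "0 < D"
  shows "(\<Sum>t\<in>{0..<int D}. cis (2 * pi * of_int t * x / real D)) = (\<Sum>i<D. cis (2 * pi * x / real D) ^ i)"
proof -
  have "(\<Sum>t\<in>{0..<int D}. cis (2 * pi * of_int t * x / real D)) = (\<Sum>i\<in>{..<D}. cis (2 * pi * of_int (int i) * x / real D))"
    by (simp add: image_atLeastZeroLessThan_int sum.reindex)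
  also have "\<dots> = (\<Sum>i<D. cis (2 * pi * x / real D) ^ i)"
    by (simp add: DeMoivre mult_ac)
  finally show ?thesis .
qed

lemma geo_zero:
  assumes D: "0 < D"
  shows "(\<Sum>t\<in>{0..<int D}. cis (2 * pi * of_int t * x / real D)) = 0 \<longleftrightarrow> (\<exists>k::int. x = of_int k \<and> \<not> int D dvd k)"
proof -
  define w where "w = cis (2 * pi * x / real D)"
  have wD: "w ^ D = cis (2 * pi * x)" unfolding w_def DeMoivre using D by simp
  have w1: "w = 1 \<longleftrightarrow> (\<exists>k::int. x = real D * of_int k)"
    unfolding w_def cis_eq_1 using D by (auto simp: field_simps)
  have wD1: "w ^ D = 1 \<longleftrightarrow> (\<exists>k::int. x = of_int k)"
    unfolding wD cis_eq_1 by auto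
  have S: "(\<Sum>t\<in>{0..<int D}. cis (2 * pi * of_int t * x / real D)) = (if w = 1 then of_nat D else (1 - w ^ D) / (1 - w))"
    unfolding geo_sum[OF D] w_def[symmetric] by (rule sum_gp_strict)
  show ?thesis
  proof (cases "w = 1")
    case True
    then obtain k where k: "x = real D * of_int k" using w1 by auto
    have "\<not> (\<exists>k::int. x = of_int k \<and> \<not> int D dvd k)"
    proof
      assume "\<exists>k::int. x = of_int k \<and> \<not> int D dvd k"
      then obtain k' where "x = of_int k'" "\<not> int D dvd k'" by auto
      with k have "k' = int D * k" by (metis of_int_eq_iff of_int_mult of_int_of_nat_eq)
      with \<open>\<not> int D dvd k'\<close> show False by simp
    qed
    then show ?thesis using S True D by simp
  next
    case False
    have "(\<exists>k::int. x = of_int k \<and> \<not> int D dvd k) \<longleftrightarrow> (\<exists>k::int. x = of_int k)"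
    proof
      assume "\<exists>k::int. x = of_int k"
      then obtain k where k: "x = of_int k" by auto
      have "\<not> int D dvd k"
      proof
        assume "int D dvd k" then obtain j where "k = int D * j" by auto
        then have "x = real D * of_int j" using k by simp
        then show False using False w1 by auto
      qed
      then show "\<exists>k::int. x = of_int k \<and> \<not> int D dvd k" using k by auto
    qed auto
    then show ?thesis using S False wD1 by simp
  qed
qed

lemma geo_int:
  assumes D: "0 < D"
  shows "(\<Sum>t\<in>{0..<int D}. cis (2 * pi * of_int t * of_int z / real D)) = (if int D dvd z then of_nat D else 0)"
proof (cases "int D dvd z")
  case True
  then obtain j where j: "z = int D * j" by auto
  have "cis (2 * pi * of_int t * of_int z / real D) = 1" for t :: int
  proof -
    have "2 * pi * of_int t * of_int z / real D = 2 * pi * of_int (t * j)" using D j by (simp add: field_simps)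
    then show ?thesis by (simp add: cis_eq_1)
  qed
  then show ?thesis using True D by simp
next
  case False
  then show ?thesis using geo_zero[OF D, of "of_int z"] by auto
qed




lemma cis_sum: "cis (\<Sum>j\<in>A. f j) = (\<Prod>j\<in>A. cis (f j))"
proof (induction A rule: infinite_finite_induct)
  case (insert x F)
  then show ?case by (simp add: cis_mult[symmetric])
qed auto

lemma cis_period: "cis (x + 2 * pi * of_int N) = cis x"
proof -
  have "cis (2 * pi * of_int N) = 1" by (auto simp: cis_eq_1)
  then show ?thesis by (simp add: cis_mult[symmetric])
qed

lemma chiG_prod: "chiG m d a b = (\<Prod>j<m. cis (2 * pi * of_int (a j) * of_int (b j) / real (d j)))"
  unfolding chiG_def exp_sum[OF finite_lessThan]
proof (rule prod.cong[OF refl])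
  fix j
  have "2 * complex_of_real pi * \<i> * of_int (a j) * of_int (b j) / of_nat (d j)
      = \<i> * complex_of_real (2 * pi * of_int (a j) * of_int (b j) / real (d j))"
    by simp
  then show "exp (2 * complex_of_real pi * \<i> * of_int (a j) * of_int (b j) / of_nat (d j)) = cis (2 * pi * of_int (a j) * of_int (b j) / real (d j))"
    by (simp only: cis_conv_exp)
qed

lemma chiN_prod: "chiN m d r x = (\<Prod>j<m. cis (2 * pi * of_int (r j) * x j / real (d j)))"
  unfolding chiN_def exp_sum[OF finite_lessThan]
proof (rule prod.cong[OF refl])
  fix j
  have "2 * complex_of_real pi * \<i> * of_int (r j) * complex_of_real (x j) / of_nat (d j)
      = \<i> * complex_of_real (2 * pi * of_int (r j) * x j / real (d j))"
    by simp
  then show "exp (2 * complex_of_real pi * \<i> * of_int (r j) * complex_of_real (x j) / of_nat (d j)) = cis (2 * pi * of_int (r j) * x j / real (d j))"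
    by (simp only: cis_conv_exp)
qed

lemma chiG_unim: "cmod (chiG m d a b) = 1"
  by (simp add: chiG_prod prod_norm[symmetric])

lemma chiN_unim: "cmod (chiN m d r x) = 1"
  by (simp add: chiN_prod prod_norm[symmetric])

lemma chiG_sym: "chiG m d a b = chiG m d b a"
  by (simp add: chiG_prod mult_ac)

lemma cnj_prod_cis: "cnj (\<Prod>j\<in>A. cis (f j)) = (\<Prod>j\<in>A. cis (- f j))"
  by (simp add: cnj_prod cis_cnj)

lemma chiG_orth:
  assumes dpos: "\<forall>j<m. 0 < d j" and a: "a \<in> zgrp m d" and b: "b \<in> zgrp m d"
  shows "(\<Sum>k\<in>zgrp m d. cnj (chiG m d k a) * chiG m d k b) = (if a = b then of_nat (card (zgrp m d)) else 0)"
proof -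
  have "(\<Sum>k\<in>zgrp m d. cnj (chiG m d k a) * chiG m d k b)
     = (\<Sum>k\<in>zgrp m d. \<Prod>j<m. (\<lambda>j t. cis (2 * pi * of_int t * of_int (b j - a j) / real (d j))) j (k j))"
  proof (rule sum.cong[OF refl])
    fix k
    have "cnj (chiG m d k a) * chiG m d k b = (\<Prod>j<m. cis (- (2 * pi * of_int (k j) * of_int (a j) / real (d j))) * cis (2 * pi * of_int (k j) * of_int (b j) / real (d j)))"
      unfolding chiG_prod cnj_prod_cis prod.distrib by simp
    also have "\<dots> = (\<Prod>j<m. cis (2 * pi * of_int (k j) * of_int (b j - a j) / real (d j)))"
      by (rule prod.cong[OF refl]) (simp add: cis_mult algebra_simps diff_divide_distrib)
    finally show "cnj (chiG m d k a) * chiG m d k b = (\<Prod>j<m. (\<lambda>j t. cis (2 * pi * of_int t * of_int (b j - a j) / real (d j))) j (k j))" by simp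
  qed
  also have "\<dots> = (\<Prod>j<m. \<Sum>t\<in>{0..<int (d j)}. cis (2 * pi * of_int t * of_int (b j - a j) / real (d j)))"
    by (rule sum_zgrp_prod)
  also have "\<dots> = (\<Prod>j<m. if int (d j) dvd (b j - a j) then of_nat (d j) else 0)"
  proof (rule prod.cong[OF refl])
    fix j assume "j \<in> {..<m}"
    then have "0 < d j" using dpos by auto
    from geo_int[OF this, of "b j - a j"]
    show "(\<Sum>t\<in>{0..<int (d j)}. cis (2 * pi * of_int t * of_int (b j - a j) / real (d j))) = (if int (d j) dvd (b j - a j) then of_nat (d j) else 0)" .
  qed
  also have "\<dots> = (if a = b then of_nat (card (zgrp m d)) else 0)"
  proof (cases "a = b")
    case True then show ?thesis by (simp add: card_zgrp)
  next
    case False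
    then obtain j where j: "a j \<noteq> b j" by auto
    have jm: "j < m"
    proof (rule ccontr)
      assume "\<not> j < m"
      then have "a j = 0" "b j = 0" using a b unfolding zgrp_def by auto
      with j show False by simp
    qed
    have "\<not> int (d j) dvd (b j - a j)"
    proof
      assume "int (d j) dvd (b j - a j)"
      then have "b j mod int (d j) = a j mod int (d j)" by (simp add: mod_eq_dvd_iff)
      moreover have "b j mod int (d j) = b j" "a j mod int (d j) = a j"
        using a b jm unfolding zgrp_def by auto
      ultimately show False using j by simp
    qed
    then show ?thesis using False jm by (auto intro!: prod_zero)
  qed
  finally show ?thesis .
qed

lemma zadd_in: "\<forall>j<m. 0 < d j \<Longrightarrow> zadd m d a b \<in> zgrp m d"
  unfolding zadd_def zgrp_def by auto

lemma zadd_comm: "zadd m d a b = zadd m d b a"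
  unfolding zadd_def by (auto simp: add.commute)

lemma chiG_mult:
  assumes dpos: "\<forall>j<m. 0 < d j"
  shows "chiG m d k a * chiG m d k b = chiG m d k (zadd m d a b)"
proof -
  have "chiG m d k a * chiG m d k b = (\<Prod>j<m. cis (2 * pi * of_int (k j) * of_int (a j) / real (d j)) * cis (2 * pi * of_int (k j) * of_int (b j) / real (d j)))"
    unfolding chiG_prod prod.distrib by simp
  also have "\<dots> = (\<Prod>j<m. cis (2 * pi * of_int (k j) * of_int (zadd m d a b j) / real (d j)))"
  proof (rule prod.cong[OF refl])
    fix j assume "j \<in> {..<m}"
    then have jm: "j < m" and dj: "0 < d j" using dpos by auto
    define q where "q = (a j + b j) div int (d j)"
    have e: "a j + b j = int (d j) * q + zadd m d a b j" unfolding q_def zadd_def using jm by simp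
    have "2 * pi * of_int (k j) * of_int (a j) / real (d j) + 2 * pi * of_int (k j) * of_int (b j) / real (d j)
        = 2 * pi * of_int (k j) * of_int (a j + b j) / real (d j)" by (simp add: add_divide_distrib[symmetric] algebra_simps)
    also have "\<dots> = 2 * pi * of_int (k j) * of_int (zadd m d a b j) / real (d j) + 2 * pi * of_int (k j * q)"
      unfolding e using dj by (simp add: field_simps)
    finally have s: "2 * pi * of_int (k j) * of_int (a j) / real (d j) + 2 * pi * of_int (k j) * of_int (b j) / real (d j)
       = 2 * pi * of_int (k j) * of_int (zadd m d a b j) / real (d j) + 2 * pi * of_int (k j * q)" .
    show "cis (2 * pi * of_int (k j) * of_int (a j) / real (d j)) * cis (2 * pi * of_int (k j) * of_int (b j) / real (d j))
       = cis (2 * pi * of_int (k j) * of_int (zadd m d a b j) / real (d j))"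
      unfolding cis_mult s by (rule cis_period)
  qed
  also have "\<dots> = chiG m d k (zadd m d a b)" by (simp add: chiG_prod)
  finally show ?thesis .
qed

lemma K_prod: "(\<Sum>r\<in>zgrp m d. chiN m d r x) = (\<Prod>j<m. \<Sum>t\<in>{0..<int (d j)}. cis (2 * pi * of_int t * x j / real (d j)))"
  unfolding chiN_prod by (rule sum_zgrp_prod[where \<phi>="\<lambda>j t. cis (2 * pi * of_int t * x j / real (d j))"])

lemma K_zero:
  assumes dpos: "\<forall>j<m. 0 < d j"
  shows "(\<Sum>r\<in>zgrp m d. chiN m d r x) = 0 \<longleftrightarrow> (\<exists>j<m. \<exists>k::int. x j = of_int k \<and> \<not> int (d j) dvd k)"
  unfolding K_prod using geo_zero dpos by (simp add: prod_zero_iff) blast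

lemma chiN_comb: "chiN m d r x1 * chiN m d r x2 * cnj (chiN m d r x3) * cnj (chiN m d r x4)
   = chiN m d r (\<lambda>j. x1 j + x2 j - x3 j - x4 j)"
proof -
  have "chiN m d r x1 * chiN m d r x2 * cnj (chiN m d r x3) * cnj (chiN m d r x4) =
     (\<Prod>j<m. cis (2 * pi * of_int (r j) * x1 j / real (d j)) * cis (2 * pi * of_int (r j) * x2 j / real (d j)) *
        cis (- (2 * pi * of_int (r j) * x3 j / real (d j))) * cis (- (2 * pi * of_int (r j) * x4 j / real (d j))))"
    unfolding chiN_prod cnj_prod_cis prod.distrib by simp
  also have "\<dots> = chiN m d r (\<lambda>j. x1 j + x2 j - x3 j - x4 j)"
    unfolding chiN_prod by (rule prod.cong[OF refl]) (simp add: cis_mult algebra_simps add_divide_distrib diff_divide_distrib)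
  finally show ?thesis .
qed

lemma rmod_props:
  assumes D: "0 < D"
  shows "0 \<le> rmod x (real D)" "rmod x (real D) < real D"
    "(\<exists>k::int. rmod x (real D) = of_int k \<and> \<not> int D dvd k) \<longleftrightarrow> (\<exists>k::int. x = of_int k \<and> \<not> int D dvd k)"
proof -
  have Dr: "0 < real D" using D by simp
  have f1: "real_of_int \<lfloor>x / real D\<rfloor> \<le> x / real D" by (rule of_int_floor_le)
  have f2: "x / real D < real_of_int \<lfloor>x / real D\<rfloor> + 1" by (rule real_of_int_floor_add_one_gt)
  from f1 have "real D * real_of_int \<lfloor>x / real D\<rfloor> \<le> x" using pos_le_divide_eq[OF Dr] by (metis mult.commute)
  then show "0 \<le> rmod x (real D)" unfolding rmod_def by simp
  from f2 Dr have "x < real D * real_of_int \<lfloor>x / real D\<rfloor> + real D" by (simp add: pos_divide_less_eq algebra_simps)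
  then show "rmod x (real D) < real D" unfolding rmod_def by simp
  define F where "F = \<lfloor>x / real D\<rfloor>"
  have r: "rmod x (real D) = x - real D * of_int F" unfolding rmod_def F_def by simp
  show "(\<exists>k::int. rmod x (real D) = of_int k \<and> \<not> int D dvd k) \<longleftrightarrow> (\<exists>k::int. x = of_int k \<and> \<not> int D dvd k)"
  proof
    assume "\<exists>k::int. rmod x (real D) = of_int k \<and> \<not> int D dvd k"
    then obtain k where k: "rmod x (real D) = of_int k" "\<not> int D dvd k" by auto
    have "x = of_int (k + int D * F)" using k(1) r by simp
    moreover have "\<not> int D dvd (k + int D * F)" using k(2) by (simp add: dvd_add_left_iff)
    ultimately show "\<exists>k::int. x = of_int k \<and> \<not> int D dvd k" by blast
  next
    assume "\<exists>k::int. x = of_int k \<and> \<not> int D dvd k"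
    then obtain k where k: "x = of_int k" "\<not> int D dvd k" by auto
    have "rmod x (real D) = of_int (k - int D * F)" using k(1) r by simp
    moreover have "\<not> int D dvd (k - int D * F)" using k(2) by (simp add: dvd_diff_left_iff)
    ultimately show "\<exists>k::int. rmod x (real D) = of_int k \<and> \<not> int D dvd k" by blast
  qed
qed

lemma tstar_iff:
  assumes dpos: "\<forall>j<m. 0 < d j"
  shows "tcomb m d a b c e \<in> tstar m d \<longleftrightarrow> (\<exists>j<m. \<exists>k::int. a j + b j - c j - e j = of_int k \<and> \<not> int (d j) dvd k)"
proof -
  have "tcomb m d a b c e \<in> rtorus m d"
    unfolding rtorus_def tcomb_def using rmod_props(1,2) dpos by auto
  then show ?thesis unfolding tstar_def tcomb_def using rmod_props(3) dpos by auto
qed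

lemma mset2_eq: "{#a, b#} = {#c, e#} \<longleftrightarrow> (a = c \<and> b = e) \<or> (a = e \<and> b = c)"
  by (auto simp: add_eq_conv_ex)




lemma div_sqrt_iff:
  fixes c :: real and n :: nat
  assumes "0 \<le> c" "0 < n"
  shows "c / real n = 1 / sqrt (real n) \<longleftrightarrow> c ^ 2 = real n"
proof -
  have sn: "0 < sqrt (real n)" using assms by simp
  have "c / real n = 1 / sqrt (real n) \<longleftrightarrow> c = real n / sqrt (real n)"
    using assms sn by (auto simp: field_simps)
  also have "real n / sqrt (real n) = sqrt (real n)" by (simp add: real_div_sqrt)
  also have "c = sqrt (real n) \<longleftrightarrow> c ^ 2 = real n"
    using assms real_sqrt_unique[of c "real n"] by auto
  finally show ?thesis .
qed

theorem theorem11: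
  fixes m m' :: nat and d d' :: "nat \<Rightarrow> nat"
    and f :: "(nat \<Rightarrow> int) \<Rightarrow> (nat \<Rightarrow> real)"
  assumes d_pos: "\<forall>j<m. 0 < d j"
    and d'_pos: "\<forall>j<m'. 0 < d' j"
    and same_order: "card (zgrp m d) = card (zgrp m' d')"
    and f_into: "\<forall>g\<in>zgrp m d. f g \<in> rtorus m' d'"
  shows "complete_MUH (zgrp m d) ((\<lambda>r. Mr m d m' d' f r) ` zgrp m' d') \<longleftrightarrow>
    (\<forall>g1\<in>zgrp m d. \<forall>g2\<in>zgrp m d. \<forall>g3\<in>zgrp m d. \<forall>g4\<in>zgrp m d.
       zadd m d g1 g2 = zadd m d g3 g4 \<and> {#g1, g2#} \<noteq> {#g3, g4#} \<longrightarrow>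
       tcomb m' d' (f g1) (f g2) (f g3) (f g4) \<in> tstar m' d')"
proof -
  define I where "I = zgrp m d"
  define n where "n = card I"
  define NN where "NN = zgrp m' d'"
  define h where "h = (\<lambda>r l. chiN m' d' r (f l))"
  define M where "M = (\<lambda>r. Mr m d m' d' f r)"
  have npos: "0 < n" unfolding n_def I_def
    using finite_zgrp zero_zgrp[OF d_pos] card_gt_0_iff by blast
  interpret C: chr2 I "chiG m d" "zadd m d" n NN h
  proof (unfold_locales)
    show "finite I" unfolding I_def by (rule finite_zgrp)
    show "card I = n" unfolding n_def ..
    show "\<And>a b. a \<in> I \<Longrightarrow> b \<in> I \<Longrightarrow> zadd m d a b \<in> I" unfolding I_def using zadd_in[OF d_pos] by blast
    show "\<And>a b. zadd m d a b = zadd m d b a" by (rule zadd_comm)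
    show "\<And>k a b. k \<in> I \<Longrightarrow> a \<in> I \<Longrightarrow> b \<in> I \<Longrightarrow> chiG m d k a * chiG m d k b = chiG m d k (zadd m d a b)"
      using chiG_mult[OF d_pos] by blast
    show "\<And>a b. a \<in> I \<Longrightarrow> b \<in> I \<Longrightarrow> (\<Sum>k\<in>I. cnj (chiG m d k a) * chiG m d k b) = (if a = b then of_nat n else 0)"
      unfolding I_def n_def using chiG_orth[OF d_pos] by blast
    show "\<And>k a. k \<in> I \<Longrightarrow> a \<in> I \<Longrightarrow> cmod (chiG m d k a) = 1" by (rule chiG_unim)
    show "\<And>k a. k \<in> I \<Longrightarrow> a \<in> I \<Longrightarrow> chiG m d k a = chiG m d a k" by (rule chiG_sym)
    show "finite NN" unfolding NN_def by (rule finite_zgrp)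
    show "card NN = n" unfolding NN_def n_def I_def using same_order by simp
    show "\<And>r l. r \<in> NN \<Longrightarrow> l \<in> I \<Longrightarrow> cmod (h r l) = 1" unfolding h_def by (rule chiN_unim)
    show "0 < n" by (rule npos)
  qed
  define s where "s = complex_of_real (sqrt (real n))"
  have ss: "cnj s * s = of_nat n" unfolding s_def by (simp flip: of_real_mult)
  have s0: "s \<noteq> 0" unfolding s_def using npos by simp
  have cms: "cmod s = sqrt (real n)" unfolding s_def by simp
  have Ment: "l \<in> I \<Longrightarrow> k \<in> I \<Longrightarrow> M r l k = chiG m d k l * h r l / s" for r l k
    unfolding M_def Mr_def h_def s_def I_def n_def by simp
  have cdiv: "cnj (x / s) * (y / s) = cnj x * y / of_nat n" for x y
    using ss s0 by (simp add: field_simps)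
  have inner: "k \<in> I \<Longrightarrow> k' \<in> I \<Longrightarrow> inner_c I (col (M r) k) (col (M r') k') = C.z (C.u r r') k k' / of_nat n" for r r' k k'
    unfolding inner_c_def col_def C.z_def C.u_def sum_divide_distrib
    using ss by (intro sum.cong[OF refl]) (simp add: Ment cdiv mult_ac)
  have had: "complex_hadamard I (M r)" if r: "r \<in> NN" for r
  proof -
    have u1: "\<forall>i\<in>I. \<forall>k\<in>I. (\<Sum>j\<in>I. cnj (M r j i) * M r j k) = (if i = k then 1 else 0)"
    proof (intro ballI)
      fix i k assume ik: "i \<in> I" "k \<in> I"
      have "(\<Sum>j\<in>I. cnj (M r j i) * M r j k) = (\<Sum>j\<in>I. cnj (chiG m d i j) * chiG m d k j) / of_nat n"
        unfolding sum_divide_distrib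
      proof (rule sum.cong[OF refl])
        fix j assume j: "j \<in> I"
        have "cnj (M r j i) * M r j k = cnj (chiG m d i j * h r j) * (chiG m d k j * h r j) / of_nat n"
          by (simp only: Ment[OF j ik(1)] Ment[OF j ik(2)] cdiv)
        also have "\<dots> = cnj (chiG m d i j) * chiG m d k j * (cnj (h r j) * h r j) / of_nat n"
          by (simp add: mult_ac)
        also have "\<dots> = cnj (chiG m d i j) * chiG m d k j / of_nat n" using C.hh[OF r j] by simp
        finally show "cnj (M r j i) * M r j k = cnj (chiG m d i j) * chiG m d k j / of_nat n" .
      qed
      then show "(\<Sum>j\<in>I. cnj (M r j i) * M r j k) = (if i = k then 1 else 0)"
        using C.orth2[OF ik] npos by simp
    qed
    have u2: "\<forall>i\<in>I. \<forall>k\<in>I. (\<Sum>j\<in>I. M r i j * cnj (M r k j)) = (if i = k then 1 else 0)"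
    proof (intro ballI)
      fix i k assume ik: "i \<in> I" "k \<in> I"
      have "(\<Sum>j\<in>I. M r i j * cnj (M r k j)) = h r i * cnj (h r k) * (\<Sum>j\<in>I. chiG m d j i * cnj (chiG m d j k)) / of_nat n"
        unfolding sum_distrib_left sum_divide_distrib
      proof (rule sum.cong[OF refl])
        fix j assume j: "j \<in> I"
        have "M r i j * cnj (M r k j) = cnj (chiG m d j k * h r k / s) * (chiG m d j i * h r i / s)"
          by (subst mult.commute) (simp only: Ment[OF ik(1) j] Ment[OF ik(2) j])
        also have "\<dots> = h r i * cnj (h r k) * (chiG m d j i * cnj (chiG m d j k)) / of_nat n"
          using ss by (simp add: cdiv mult_ac)
        finally show "M r i j * cnj (M r k j) = h r i * cnj (h r k) * (chiG m d j i * cnj (chiG m d j k)) / of_nat n" .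
      qed
      then show "(\<Sum>j\<in>I. M r i j * cnj (M r k j)) = (if i = k then 1 else 0)"
        using C.orth'[OF ik] npos C.hh[OF r ik(2)] by (simp add: mult.commute)
    qed
    have en: "\<forall>i\<in>I. \<forall>k\<in>I. cmod (M r i k) = 1 / sqrt (real (card I))"
      using Ment cms C.hunim[OF r] chiG_unim by (simp add: norm_mult norm_divide n_def)
    show ?thesis unfolding complex_hadamard_def unitary_mat_def using u1 u2 en by blast
  qed
  have MUiff: "mutually_unbiased I (M r) (M r') \<longleftrightarrow> (\<forall>k\<in>I. \<forall>k'\<in>I. cmod (C.z (C.u r r') k k') ^ 2 = real n)" for r r'
  proof -
    have "cmod (inner_c I (col (M r) k) (col (M r') k')) = 1 / sqrt (real (card I)) \<longleftrightarrow> cmod (C.z (C.u r r') k k') ^ 2 = real n"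
      if "k \<in> I" "k' \<in> I" for k k'
      using div_sqrt_iff[OF norm_ge_zero npos] inner[OF that] by (simp add: norm_divide n_def)
    then show ?thesis unfolding mutually_unbiased_def by auto
  qed
  define MUall where "MUall \<longleftrightarrow> (\<forall>r\<in>NN. \<forall>r'\<in>NN. r \<noteq> r' \<longrightarrow> (\<forall>k\<in>I. \<forall>k'\<in>I. cmod (C.z (C.u r r') k k') ^ 2 = real n))"
  have L: "complete_MUH I (M ` NN) \<longleftrightarrow> MUall"
  proof
    assume cm: "complete_MUH I (M ` NN)"
    have "card (M ` NN) = card I" using cm unfolding complete_MUH_def by blast
    then have "card (M ` NN) = card NN" using C.cardN C.cardI by simp
    then have inj: "inj_on M NN" using eq_card_imp_inj_on C.finN by blast
    show MUall unfolding MUall_def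
    proof (rule ballI, rule ballI, rule impI)
      fix r r' assume rr: "r \<in> NN" "r' \<in> NN" "r \<noteq> r'"
      then have ne: "M r \<noteq> M r'" using inj_on_eq_iff[OF inj rr(1) rr(2)] by simp
      have mem: "M r \<in> M ` NN" "M r' \<in> M ` NN" using rr by auto
      have "\<forall>A\<in>M ` NN. \<forall>B\<in>M ` NN. A \<noteq> B \<longrightarrow> mutually_unbiased I A B" using cm unfolding complete_MUH_def by blast
      then have "mutually_unbiased I (M r) (M r')" using mem ne by blast
      then show "\<forall>k\<in>I. \<forall>k'\<in>I. cmod (C.z (C.u r r') k k') ^ 2 = real n" using MUiff by blast
    qed
  next
    assume mu: MUall
    have "I \<noteq> {}" using npos C.cardI by auto
    then obtain k0 where k0: "k0 \<in> I" by blast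
    have inj: "inj_on M NN"
    proof (rule inj_onI, rule ccontr)
      fix r r' assume rr: "r \<in> NN" "r' \<in> NN" "M r = M r'" "r \<noteq> r'"
      have "C.z (C.u r r') k0 k0 / of_nat n = C.z (C.u r r) k0 k0 / of_nat n"
        using inner[OF k0 k0, of r r'] inner[OF k0 k0, of r r] rr(3) by simp
      then have zn: "C.z (C.u r r') k0 k0 = of_nat n" using C.zdiag[OF rr(1) k0 k0] npos by simp
      have "cmod (C.z (C.u r r') k0 k0) ^ 2 = real n" using mu rr k0 unfolding MUall_def by blast
      then have "real n ^ 2 = real n" using zn by simp
      then have "n = 1" using npos by (simp add: power2_eq_square)
      then have "card NN = 1" using C.cardN by simp
      then obtain x where "NN = {x}" by (rule card_1_singletonE)
      then show False using rr by simp
    qed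
    show "complete_MUH I (M ` NN)" unfolding complete_MUH_def
    proof (intro conjI)
      show "finite (M ` NN)" using C.finN by simp
      show "card (M ` NN) = card I" using inj C.cardN C.cardI by (simp add: card_image)
      show "\<forall>A\<in>M ` NN. complex_hadamard I A" using had by blast
      show "\<forall>A\<in>M ` NN. \<forall>B\<in>M ` NN. A \<noteq> B \<longrightarrow> mutually_unbiased I A B"
      proof (intro ballI impI)
        fix A B assume AB: "A \<in> M ` NN" "B \<in> M ` NN" "A \<noteq> B"
        then obtain r r' where rr: "r \<in> NN" "r' \<in> NN" "A = M r" "B = M r'" by blast
        then have "r \<noteq> r'" using AB by blast
        then have "\<forall>k\<in>I. \<forall>k'\<in>I. cmod (C.z (C.u r r') k k') ^ 2 = real n" using mu rr unfolding MUall_def by blast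
        then show "mutually_unbiased I A B" using MUiff rr by simp
      qed
    qed
  qed
  have Wx: "C.W (a, b) (c, e) = (\<Sum>r\<in>NN. chiN m' d' r (\<lambda>j. f a j + f b j - f c j - f e j))" for a b c e
    unfolding C.W_def by (simp add: h_def chiN_comb)
  have R: "(\<forall>p\<in>I\<times>I. \<forall>p'\<in>I\<times>I. C.Q p p' \<and> \<not> C.triv p p' \<longrightarrow> C.W p p' = 0) \<longleftrightarrow>
    (\<forall>g1\<in>zgrp m d. \<forall>g2\<in>zgrp m d. \<forall>g3\<in>zgrp m d. \<forall>g4\<in>zgrp m d.
       zadd m d g1 g2 = zadd m d g3 g4 \<and> {#g1, g2#} \<noteq> {#g3, g4#} \<longrightarrow>
       tcomb m' d' (f g1) (f g2) (f g3) (f g4) \<in> tstar m' d')"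
  proof -
    have e: "C.W (a, b) (c, e) = 0 \<longleftrightarrow> tcomb m' d' (f a) (f b) (f c) (f e) \<in> tstar m' d'" for a b c e
    proof -
      have "C.W (a, b) (c, e) = 0 \<longleftrightarrow> (\<Sum>r\<in>zgrp m' d'. chiN m' d' r (\<lambda>j. f a j + f b j - f c j - f e j)) = 0"
        using Wx[of a b c e] unfolding NN_def by simp
      also have "\<dots> \<longleftrightarrow> tcomb m' d' (f a) (f b) (f c) (f e) \<in> tstar m' d'"
        unfolding K_zero[OF d'_pos] tstar_iff[OF d'_pos] by simp
      finally show ?thesis .
    qed
    show ?thesis unfolding I_def C.Q_def C.triv_def e[symmetric] mset2_eq by auto
  qed
  show ?thesis using L C.equiv_abstract R unfolding MUall_def I_def NN_def M_def by simp
qed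



end
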